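(* Let $M$ and $N$ be objects of an abelian category $\mathcal{A}$, let $M'$ be a direct summand of $M$ and $N'$ a direct summand of $N$. (1) If $N$ is strongly $M$-Rickart, then $N'$ is strongly $M'$-Rickart. (2) If $N$ is dual strongly $M$-Rickart, then $N'$ is dual strongly $M'$-Rickart.
   Context: A morphism $f:X\to Y$ is a section if $f'f=1_X$ for some $f'$, a retraction if $ff'=1_Y$ for some $f'$. A monomorphism $k:K\to X$ is fully invariant if for every $h:X\to X$ there is $\alpha:K\to K$ with $hk=k\alpha$; an epimorphism $c:X\to C$ is fully coinvariant if for every $h:X\to X$ there is $\gamma:C\to C$ with $ch=\gamma c$. For objects $M,N$: $N$ is strongly $M$-Rickart if the kernel of every morphism $f:M\to N$ is a fully invariant section; $N$ is dual strongly $M$-Rickart if the cokernel of every morphism $f:M\to N$ is a fully coinvariant retraction. *)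

theory Defs
  imports Main
begin

text \<open>A (small-or-large) category presented by an object set, an arrow set,
source/target maps, composition (cmp g f = g after f) and identities,
together with a preadditive structure on each hom-set.\<close>

record ('o, 'm) acat =
  Obj :: "'o set"
  Arr :: "'m set"
  src :: "'m \<Rightarrow> 'o"
  tgt :: "'m \<Rightarrow> 'o"
  cmp :: "'m \<Rightarrow> 'm \<Rightarrow> 'm"
  idm :: "'o \<Rightarrow> 'm"
  pls :: "'m \<Rightarrow> 'm \<Rightarrow> 'm"
  zro :: "'o \<Rightarrow> 'o \<Rightarrow> 'm"
  ngt :: "'m \<Rightarrow> 'm"

definition hom :: "('o, 'm) acat \<Rightarrow> 'o \<Rightarrow> 'o \<Rightarrow> 'm set" where
  "hom C a b = {f \<in> Arr C. src C f = a \<and> tgt C f = b}"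

definition category :: "('o, 'm) acat \<Rightarrow> bool" where
  "category C \<longleftrightarrow>
     (\<forall>f \<in> Arr C. src C f \<in> Obj C \<and> tgt C f \<in> Obj C) \<and>
     (\<forall>a \<in> Obj C. idm C a \<in> hom C a a) \<and>
     (\<forall>a \<in> Obj C. \<forall>b \<in> Obj C. \<forall>c \<in> Obj C. \<forall>f \<in> hom C a b. \<forall>g \<in> hom C b c.
        cmp C g f \<in> hom C a c) \<and>
     (\<forall>a \<in> Obj C. \<forall>b \<in> Obj C. \<forall>c \<in> Obj C. \<forall>d \<in> Obj C.
        \<forall>f \<in> hom C a b. \<forall>g \<in> hom C b c. \<forall>h \<in> hom C c d.
        cmp C h (cmp C g f) = cmp C (cmp C h g) f) \<and>
     (\<forall>a \<in> Obj C. \<forall>b \<in> Obj C. \<forall>f \<in> hom C a b.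
        cmp C f (idm C a) = f \<and> cmp C (idm C b) f = f)"

definition preadditive :: "('o, 'm) acat \<Rightarrow> bool" where
  "preadditive C \<longleftrightarrow> category C \<and>
     (\<forall>a \<in> Obj C. \<forall>b \<in> Obj C.
        zro C a b \<in> hom C a b \<and>
        (\<forall>f \<in> hom C a b. \<forall>g \<in> hom C a b. pls C f g \<in> hom C a b) \<and>
        (\<forall>f \<in> hom C a b. ngt C f \<in> hom C a b) \<and>
        (\<forall>f \<in> hom C a b. \<forall>g \<in> hom C a b. \<forall>h \<in> hom C a b.
           pls C (pls C f g) h = pls C f (pls C g h)) \<and>
        (\<forall>f \<in> hom C a b. \<forall>g \<in> hom C a b. pls C f g = pls C g f) \<and>
        (\<forall>f \<in> hom C a b. pls C f (zro C a b) = f) \<and>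
        (\<forall>f \<in> hom C a b. pls C f (ngt C f) = zro C a b)) \<and>
     (\<forall>a \<in> Obj C. \<forall>b \<in> Obj C. \<forall>c \<in> Obj C.
        \<forall>f \<in> hom C a b. \<forall>g \<in> hom C a b. \<forall>h \<in> hom C b c.
          cmp C h (pls C f g) = pls C (cmp C h f) (cmp C h g)) \<and>
     (\<forall>a \<in> Obj C. \<forall>b \<in> Obj C. \<forall>c \<in> Obj C.
        \<forall>f \<in> hom C a b. \<forall>g \<in> hom C b c. \<forall>h \<in> hom C b c.
          cmp C (pls C g h) f = pls C (cmp C g f) (cmp C h f))"

definition mono :: "('o, 'm) acat \<Rightarrow> 'm \<Rightarrow> bool" where
  "mono C f \<longleftrightarrow> f \<in> Arr C \<and>
     (\<forall>x \<in> Obj C. \<forall>g \<in> hom C x (src C f). \<forall>h \<in> hom C x (src C f).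
        cmp C f g = cmp C f h \<longrightarrow> g = h)"

definition epi :: "('o, 'm) acat \<Rightarrow> 'm \<Rightarrow> bool" where
  "epi C f \<longleftrightarrow> f \<in> Arr C \<and>
     (\<forall>x \<in> Obj C. \<forall>g \<in> hom C (tgt C f) x. \<forall>h \<in> hom C (tgt C f) x.
        cmp C g f = cmp C h f \<longrightarrow> g = h)"

definition is_kernel :: "('o, 'm) acat \<Rightarrow> 'm \<Rightarrow> 'm \<Rightarrow> bool" where
  "is_kernel C f k \<longleftrightarrow> f \<in> Arr C \<and> k \<in> Arr C \<and> tgt C k = src C f \<and>
     cmp C f k = zro C (src C k) (tgt C f) \<and>
     (\<forall>x \<in> Obj C. \<forall>g \<in> hom C x (src C f). cmp C f g = zro C x (tgt C f) \<longrightarrow>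
        (\<exists>!u. u \<in> hom C x (src C k) \<and> cmp C k u = g))"

definition is_cokernel :: "('o, 'm) acat \<Rightarrow> 'm \<Rightarrow> 'm \<Rightarrow> bool" where
  "is_cokernel C f c \<longleftrightarrow> f \<in> Arr C \<and> c \<in> Arr C \<and> src C c = tgt C f \<and>
     cmp C c f = zro C (src C f) (tgt C c) \<and>
     (\<forall>x \<in> Obj C. \<forall>g \<in> hom C (tgt C f) x. cmp C g f = zro C (src C f) x \<longrightarrow>
        (\<exists>!u. u \<in> hom C (tgt C c) x \<and> cmp C u c = g))"

definition is_zero_object :: "('o, 'm) acat \<Rightarrow> 'o \<Rightarrow> bool" where
  "is_zero_object C z \<longleftrightarrow> z \<in> Obj C \<and>
     (\<forall>a \<in> Obj C. (\<exists>!f. f \<in> hom C z a) \<and> (\<exists>!f. f \<in> hom C a z))"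

definition is_product :: "('o, 'm) acat \<Rightarrow> 'o \<Rightarrow> 'o \<Rightarrow> 'o \<Rightarrow> 'm \<Rightarrow> 'm \<Rightarrow> bool" where
  "is_product C a b p p1 p2 \<longleftrightarrow> p \<in> Obj C \<and> p1 \<in> hom C p a \<and> p2 \<in> hom C p b \<and>
     (\<forall>x \<in> Obj C. \<forall>f \<in> hom C x a. \<forall>g \<in> hom C x b.
        (\<exists>!u. u \<in> hom C x p \<and> cmp C p1 u = f \<and> cmp C p2 u = g))"

definition abelian :: "('o, 'm) acat \<Rightarrow> bool" where
  "abelian C \<longleftrightarrow> preadditive C \<and>
     (\<exists>z. is_zero_object C z) \<and>
     (\<forall>a \<in> Obj C. \<forall>b \<in> Obj C. \<exists>p p1 p2. is_product C a b p p1 p2) \<and>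
     (\<forall>f \<in> Arr C. \<exists>k. is_kernel C f k) \<and>
     (\<forall>f \<in> Arr C. \<exists>c. is_cokernel C f c) \<and>
     (\<forall>f. mono C f \<longrightarrow> (\<exists>g. is_kernel C g f)) \<and>
     (\<forall>f. epi C f \<longrightarrow> (\<exists>g. is_cokernel C g f))"

definition is_section :: "('o, 'm) acat \<Rightarrow> 'm \<Rightarrow> bool" where
  "is_section C f \<longleftrightarrow> f \<in> Arr C \<and>
     (\<exists>f' \<in> hom C (tgt C f) (src C f). cmp C f' f = idm C (src C f))"

definition is_retraction :: "('o, 'm) acat \<Rightarrow> 'm \<Rightarrow> bool" where
  "is_retraction C f \<longleftrightarrow> f \<in> Arr C \<and>
     (\<exists>f' \<in> hom C (tgt C f) (src C f). cmp C f f' = idm C (tgt C f))"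

definition fully_invariant :: "('o, 'm) acat \<Rightarrow> 'm \<Rightarrow> bool" where
  "fully_invariant C k \<longleftrightarrow> mono C k \<and>
     (\<forall>h \<in> hom C (tgt C k) (tgt C k). \<exists>\<alpha> \<in> hom C (src C k) (src C k).
        cmp C h k = cmp C k \<alpha>)"

definition fully_coinvariant :: "('o, 'm) acat \<Rightarrow> 'm \<Rightarrow> bool" where
  "fully_coinvariant C c \<longleftrightarrow> epi C c \<and>
     (\<forall>h \<in> hom C (src C c) (src C c). \<exists>\<gamma> \<in> hom C (tgt C c) (tgt C c).
        cmp C c h = cmp C \<gamma> c)"

definition strongly_rickart :: "('o, 'm) acat \<Rightarrow> 'o \<Rightarrow> 'o \<Rightarrow> bool" where
  "strongly_rickart C M N \<longleftrightarrow>
     (\<forall>f \<in> hom C M N. \<forall>k. is_kernel C f k \<longrightarrow> fully_invariant C k \<and> is_section C k)"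

definition dual_strongly_rickart :: "('o, 'm) acat \<Rightarrow> 'o \<Rightarrow> 'o \<Rightarrow> bool" where
  "dual_strongly_rickart C M N \<longleftrightarrow>
     (\<forall>f \<in> hom C M N. \<forall>c. is_cokernel C f c \<longrightarrow> fully_coinvariant C c \<and> is_retraction C c)"

definition direct_summand :: "('o, 'm) acat \<Rightarrow> 'o \<Rightarrow> 'o \<Rightarrow> bool" where
  "direct_summand C M' M \<longleftrightarrow> M' \<in> Obj C \<and> M \<in> Obj C \<and>
     (\<exists>M'' \<in> Obj C. \<exists>i1 \<in> hom C M' M. \<exists>i2 \<in> hom C M'' M.
        \<exists>p1 \<in> hom C M M'. \<exists>p2 \<in> hom C M M''.
          cmp C p1 i1 = idm C M' \<and> cmp C p2 i2 = idm C M'' \<and>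
          cmp C p2 i1 = zro C M' M'' \<and> cmp C p1 i2 = zro C M'' M' \<and>
          pls C (cmp C i1 p1) (cmp C i2 p2) = idm C M)"

end

theory Submission
  imports Defs
begin

locale pa = fixes C :: "('o, 'm) acat" assumes pa: "preadditive C"
begin

lemma cat: "category C" using pa unfolding preadditive_def by blast

lemma ST: "f \<in> Arr C \<Longrightarrow> src C f \<in> Obj C \<and> tgt C f \<in> Obj C"
  using cat unfolding category_def by blast

lemma CAX:
  "\<forall>a \<in> Obj C. \<forall>b \<in> Obj C. \<forall>c \<in> Obj C. \<forall>f \<in> hom C a b. \<forall>g \<in> hom C b c.
        cmp C g f \<in> hom C a c"
  "\<forall>a \<in> Obj C. \<forall>b \<in> Obj C. \<forall>c \<in> Obj C. \<forall>d \<in> Obj C.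
        \<forall>f \<in> hom C a b. \<forall>g \<in> hom C b c. \<forall>h \<in> hom C c d.
        cmp C h (cmp C g f) = cmp C (cmp C h g) f"
  using cat unfolding category_def by blast+

lemma CH: "f \<in> Arr C \<Longrightarrow> g \<in> Arr C \<Longrightarrow> src C g = tgt C f \<Longrightarrow> cmp C g f \<in> hom C (src C f) (tgt C g)"
proof -
  assume a: "f \<in> Arr C" "g \<in> Arr C" "src C g = tgt C f"
  have o: "src C f \<in> Obj C" "tgt C f \<in> Obj C" "tgt C g \<in> Obj C" using ST a by auto
  have h: "f \<in> hom C (src C f) (tgt C f)" "g \<in> hom C (tgt C f) (tgt C g)" using a by (auto simp: hom_def)
  show ?thesis using CAX(1) o h by blast
qed

lemma A1: "f \<in> Arr C \<Longrightarrow> g \<in> Arr C \<Longrightarrow> src C g = tgt C f \<Longrightarrow> cmp C g f \<in> Arr C"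
  and S1: "f \<in> Arr C \<Longrightarrow> g \<in> Arr C \<Longrightarrow> src C g = tgt C f \<Longrightarrow> src C (cmp C g f) = src C f"
  and T1: "f \<in> Arr C \<Longrightarrow> g \<in> Arr C \<Longrightarrow> src C g = tgt C f \<Longrightarrow> tgt C (cmp C g f) = tgt C g"
  using CH unfolding hom_def by auto

lemma AS: "f \<in> Arr C \<Longrightarrow> g \<in> Arr C \<Longrightarrow> h \<in> Arr C \<Longrightarrow> src C g = tgt C f \<Longrightarrow> src C h = tgt C g
  \<Longrightarrow> cmp C (cmp C h g) f = cmp C h (cmp C g f)"
proof -
  assume a: "f \<in> Arr C" "g \<in> Arr C" "h \<in> Arr C" "src C g = tgt C f" "src C h = tgt C g"
  have o: "src C f \<in> Obj C" "tgt C f \<in> Obj C" "tgt C g \<in> Obj C" "tgt C h \<in> Obj C" using ST a by auto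
  have h: "f \<in> hom C (src C f) (tgt C f)" "g \<in> hom C (tgt C f) (tgt C g)" "h \<in> hom C (tgt C g) (tgt C h)"
    using a unfolding hom_def by auto
  show ?thesis using CAX(2)[rule_format, OF o h] by simp
qed

lemma IDA: "a \<in> Obj C \<Longrightarrow> idm C a \<in> Arr C \<and> src C (idm C a) = a \<and> tgt C (idm C a) = a"
  using cat unfolding category_def hom_def by auto

lemma IL: "f \<in> Arr C \<Longrightarrow> a = tgt C f \<Longrightarrow> cmp C (idm C a) f = f"
  and IR: "f \<in> Arr C \<Longrightarrow> a = src C f \<Longrightarrow> cmp C f (idm C a) = f"
proof -
  assume a: "f \<in> Arr C"
  have "f \<in> hom C (src C f) (tgt C f)" using a unfolding hom_def by auto
  then have "cmp C f (idm C (src C f)) = f \<and> cmp C (idm C (tgt C f)) f = f"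
    using cat ST[OF a] unfolding category_def by blast
  then show "a = tgt C f \<Longrightarrow> cmp C (idm C a) f = f" "a = src C f \<Longrightarrow> cmp C f (idm C a) = f" by auto
qed

lemma PAX:
  "\<forall>a \<in> Obj C. \<forall>b \<in> Obj C.
        zro C a b \<in> hom C a b \<and>
        (\<forall>f \<in> hom C a b. \<forall>g \<in> hom C a b. pls C f g \<in> hom C a b) \<and>
        (\<forall>f \<in> hom C a b. ngt C f \<in> hom C a b) \<and>
        (\<forall>f \<in> hom C a b. \<forall>g \<in> hom C a b. \<forall>h \<in> hom C a b.
           pls C (pls C f g) h = pls C f (pls C g h)) \<and>
        (\<forall>f \<in> hom C a b. \<forall>g \<in> hom C a b. pls C f g = pls C g f) \<and>
        (\<forall>f \<in> hom C a b. pls C f (zro C a b) = f) \<and>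
        (\<forall>f \<in> hom C a b. pls C f (ngt C f) = zro C a b)"
  apply (insert pa[unfolded preadditive_def]) apply (elim conjE) apply assumption done

lemma PBL: "\<forall>a \<in> Obj C. \<forall>b \<in> Obj C. \<forall>c \<in> Obj C.
        \<forall>f \<in> hom C a b. \<forall>g \<in> hom C a b. \<forall>h \<in> hom C b c.
          cmp C h (pls C f g) = pls C (cmp C h f) (cmp C h g)"
  apply (insert pa[unfolded preadditive_def]) apply (elim conjE) apply assumption done

lemma PBR: "\<forall>a \<in> Obj C. \<forall>b \<in> Obj C. \<forall>c \<in> Obj C.
        \<forall>f \<in> hom C a b. \<forall>g \<in> hom C b c. \<forall>h \<in> hom C b c.
          cmp C (pls C g h) f = pls C (cmp C g f) (cmp C h f)"
  apply (insert pa[unfolded preadditive_def]) apply (elim conjE) apply assumption done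

lemma PA1: assumes "a \<in> Obj C" "b \<in> Obj C"
  shows "zro C a b \<in> hom C a b"
   "\<And>f g. f \<in> hom C a b \<Longrightarrow> g \<in> hom C a b \<Longrightarrow> pls C f g \<in> hom C a b"
   "\<And>f. f \<in> hom C a b \<Longrightarrow> ngt C f \<in> hom C a b"
   "\<And>f g h. f \<in> hom C a b \<Longrightarrow> g \<in> hom C a b \<Longrightarrow> h \<in> hom C a b \<Longrightarrow>
           pls C (pls C f g) h = pls C f (pls C g h)"
   "\<And>f. f \<in> hom C a b \<Longrightarrow> pls C f (zro C a b) = f"
   "\<And>f. f \<in> hom C a b \<Longrightarrow> pls C f (ngt C f) = zro C a b"
  using PAX assms by blast+

lemma ZH: "a \<in> Obj C \<Longrightarrow> b \<in> Obj C \<Longrightarrow> zro C a b \<in> hom C a b"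
  using PA1 by blast

lemma zero_unique:
  assumes z: "z \<in> hom C a b" and a: "a \<in> Obj C" and b: "b \<in> Obj C" and e: "pls C z z = z"
  shows "z = zro C a b"
proof -
  note ax = PA1[OF a b]
  have "zro C a b = pls C z (ngt C z)" using ax z by auto
  also have "\<dots> = pls C (pls C z z) (ngt C z)" using e by simp
  also have "\<dots> = pls C z (pls C z (ngt C z))" using ax z by auto
  also have "\<dots> = z" using ax z by auto
  finally show ?thesis by simp
qed

lemma ZL: "f \<in> Arr C \<Longrightarrow> b = tgt C f \<Longrightarrow> c \<in> Obj C \<Longrightarrow> cmp C (zro C b c) f = zro C (src C f) c"
proof -
  assume f: "f \<in> Arr C" and b: "b = tgt C f" and c: "c \<in> Obj C"
  let ?a = "src C f"
  have ab: "?a \<in> Obj C" "b \<in> Obj C" using ST[OF f] b by auto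
  have fh: "f \<in> hom C ?a b" using f b unfolding hom_def by auto
  have zh: "zro C b c \<in> hom C b c" using ZH ab c by auto
  have zz: "pls C (zro C b c) (zro C b c) = zro C b c" using PA1[OF ab(2) c] zh by blast
  have cz: "cmp C (zro C b c) f \<in> hom C ?a c" using CAX(1) ab c fh zh by blast
  have "cmp C (pls C (zro C b c) (zro C b c)) f
        = pls C (cmp C (zro C b c) f) (cmp C (zro C b c) f)"
    using PBR[rule_format, OF ab c fh zh zh] .
  then have "pls C (cmp C (zro C b c) f) (cmp C (zro C b c) f) = cmp C (zro C b c) f"
    using zz by simp
  then show ?thesis using zero_unique[OF cz ab(1) c] by simp
qed

lemma ZR: "f \<in> Arr C \<Longrightarrow> b = src C f \<Longrightarrow> a \<in> Obj C \<Longrightarrow> cmp C f (zro C a b) = zro C a (tgt C f)"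
proof -
  assume f: "f \<in> Arr C" and b: "b = src C f" and a: "a \<in> Obj C"
  let ?c = "tgt C f"
  have bc: "b \<in> Obj C" "?c \<in> Obj C" using ST[OF f] b by auto
  have fh: "f \<in> hom C b ?c" using f b unfolding hom_def by auto
  have zh: "zro C a b \<in> hom C a b" using ZH bc a by auto
  have zz: "pls C (zro C a b) (zro C a b) = zro C a b" using PA1[OF a bc(1)] zh by blast
  have cz: "cmp C f (zro C a b) \<in> hom C a ?c" using CAX(1) bc a fh zh by blast
  have "cmp C f (pls C (zro C a b) (zro C a b))
        = pls C (cmp C f (zro C a b)) (cmp C f (zro C a b))"
    using PBL[rule_format, OF a bc zh zh fh] .
  then have "pls C (cmp C f (zro C a b)) (cmp C f (zro C a b)) = cmp C f (zro C a b)"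
    using zz by simp
  then show ?thesis using zero_unique[OF cz a bc(2)] by simp
qed

lemmas ar = A1 S1 T1 AS IL IR ZL ZR

lemma post: "cmp C a b = e \<Longrightarrow> a \<in> Arr C \<Longrightarrow> b \<in> Arr C \<Longrightarrow> src C a = tgt C b \<Longrightarrow> X \<in> Arr C
  \<Longrightarrow> tgt C X = src C b \<Longrightarrow> cmp C a (cmp C b X) = cmp C e X"
  by (simp add: AS[symmetric])

lemma ex1_same: "\<exists>!u. P u \<Longrightarrow> P a \<Longrightarrow> P b \<Longrightarrow> a = b" by blast

lemma kernel_mono:
  assumes k: "is_kernel C f k" and "a \<in> Arr C" "b \<in> Arr C" "tgt C a = src C k" "tgt C b = src C k"
    "src C a = src C b" "cmp C k a = cmp C k b"
  shows "a = b"
proof -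
  have kd: "f \<in> Arr C" "k \<in> Arr C" "tgt C k = src C f" "cmp C f k = zro C (src C k) (tgt C f)"
    and U: "\<forall>x \<in> Obj C. \<forall>g \<in> hom C x (src C f). cmp C f g = zro C x (tgt C f) \<longrightarrow>
        (\<exists>!u. u \<in> hom C x (src C k) \<and> cmp C k u = g)"
    using k unfolding is_kernel_def by blast+
  let ?x = "src C a"
  have x: "?x \<in> Obj C" using ST assms by blast
  have g: "cmp C k a \<in> hom C ?x (src C f)" using assms kd by (simp add: hom_def ar)
  have "cmp C f (cmp C k a) = zro C ?x (tgt C f)"
    using assms kd ST[OF kd(1)] by (simp add: AS[symmetric] ZL)
  then have E: "\<exists>!u. u \<in> hom C ?x (src C k) \<and> cmp C k u = cmp C k a" by (rule U[rule_format, OF x g])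
  have "a \<in> hom C ?x (src C k)" "b \<in> hom C ?x (src C k)" using assms by (auto simp: hom_def)
  then show ?thesis using ex1_same[OF E] assms(7) by simp
qed

lemma kernel_factor:
  assumes k: "is_kernel C f k" and "g \<in> Arr C" "tgt C g = src C f" "cmp C f g = zro C (src C g) (tgt C f)"
  shows "\<exists>u. u \<in> Arr C \<and> src C u = src C g \<and> tgt C u = src C k \<and> cmp C k u = g"
proof -
  have U: "\<forall>x \<in> Obj C. \<forall>g \<in> hom C x (src C f). cmp C f g = zro C x (tgt C f) \<longrightarrow>
        (\<exists>!u. u \<in> hom C x (src C k) \<and> cmp C k u = g)"
    using k unfolding is_kernel_def by blast
  have "src C g \<in> Obj C" using ST assms by blast
  moreover have "g \<in> hom C (src C g) (src C f)" using assms by (simp add: hom_def)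
  ultimately show ?thesis using U assms unfolding hom_def by blast
qed

lemma coker_epi:
  assumes c: "is_cokernel C f c" and "a \<in> Arr C" "b \<in> Arr C" "src C a = tgt C c" "src C b = tgt C c"
    "tgt C a = tgt C b" "cmp C a c = cmp C b c"
  shows "a = b"
proof -
  have kd: "f \<in> Arr C" "c \<in> Arr C" "src C c = tgt C f" "cmp C c f = zro C (src C f) (tgt C c)"
    and U: "\<forall>x \<in> Obj C. \<forall>g \<in> hom C (tgt C f) x. cmp C g f = zro C (src C f) x \<longrightarrow>
        (\<exists>!u. u \<in> hom C (tgt C c) x \<and> cmp C u c = g)"
    using c unfolding is_cokernel_def by blast+
  let ?x = "tgt C a"
  have x: "?x \<in> Obj C" using ST assms by blast
  have g: "cmp C a c \<in> hom C (tgt C f) ?x" using assms kd by (simp add: hom_def ar)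
  have "cmp C (cmp C a c) f = zro C (src C f) ?x"
    using assms kd ST[OF kd(1)] ST[OF assms(2)] by (simp add: ar)
  then have E: "\<exists>!u. u \<in> hom C (tgt C c) ?x \<and> cmp C u c = cmp C a c" by (rule U[rule_format, OF x g])
  have "a \<in> hom C (tgt C c) ?x" "b \<in> hom C (tgt C c) ?x" using assms by (auto simp: hom_def)
  then show ?thesis using ex1_same[OF E] assms(7) by simp
qed

lemma coker_factor:
  assumes c: "is_cokernel C f c" and "g \<in> Arr C" "src C g = tgt C f" "cmp C g f = zro C (src C f) (tgt C g)"
  shows "\<exists>u. u \<in> Arr C \<and> src C u = tgt C c \<and> tgt C u = tgt C g \<and> cmp C u c = g"
proof -
  have U: "\<forall>x \<in> Obj C. \<forall>g \<in> hom C (tgt C f) x. cmp C g f = zro C (src C f) x \<longrightarrow>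
        (\<exists>!u. u \<in> hom C (tgt C c) x \<and> cmp C u c = g)"
    using c unfolding is_cokernel_def by blast
  have "tgt C g \<in> Obj C" using ST assms by blast
  moreover have "g \<in> hom C (tgt C f) (tgt C g)" using assms by (simp add: hom_def)
  ultimately show ?thesis using U assms unfolding hom_def by blast
qed

end


lemma hom_iff: "f \<in> hom C a b \<longleftrightarrow> f \<in> Arr C \<and> src C f = a \<and> tgt C f = b"
  by (simp add: hom_def)

theorem corollary2p18:
  fixes C :: "('o, 'm) acat" and M N M' N' :: 'o
  assumes "abelian C"
    and "M \<in> Obj C" and "N \<in> Obj C"
    and "direct_summand C M' M" and "direct_summand C N' N"
  shows "(strongly_rickart C M N \<longrightarrow> strongly_rickart C M' N') \<and>
         (dual_strongly_rickart C M N \<longrightarrow> dual_strongly_rickart C M' N')"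
proof -
  have pre: "preadditive C" apply (insert assms(1)[unfolded abelian_def]) apply (elim conjE) apply assumption done
  interpret pa C using pre by (rule pa.intro)
  have KER: "\<forall>f \<in> Arr C. \<exists>k. is_kernel C f k" apply (insert assms(1)[unfolded abelian_def]) apply (elim conjE) apply assumption done
  have COK: "\<forall>f \<in> Arr C. \<exists>c. is_cokernel C f c" apply (insert assms(1)[unfolded abelian_def]) apply (elim conjE) apply assumption done
  obtain i1 p1 where i1: "i1 \<in> Arr C" "src C i1 = M'" "tgt C i1 = M"
    and p1: "p1 \<in> Arr C" "src C p1 = M" "tgt C p1 = M'" and pi: "cmp C p1 i1 = idm C M'"
    and M': "M' \<in> Obj C"
  proof -
    from assms(4)[unfolded direct_summand_def] obtain M'' i1 i2 p1 p2 where
      "M' \<in> Obj C" "i1 \<in> hom C M' M" "p1 \<in> hom C M M'" "cmp C p1 i1 = idm C M'" by (elim conjE bexE) blast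
    then show ?thesis using that unfolding hom_def by blast
  qed
  obtain j1 q1 where j1: "j1 \<in> Arr C" "src C j1 = N'" "tgt C j1 = N"
    and q1: "q1 \<in> Arr C" "src C q1 = N" "tgt C q1 = N'" and qj: "cmp C q1 j1 = idm C N'"
    and N': "N' \<in> Obj C"
  proof -
    from assms(5)[unfolded direct_summand_def] obtain N'' i1 i2 p1 p2 where
      "N' \<in> Obj C" "i1 \<in> hom C N' N" "p1 \<in> hom C N N'" "cmp C p1 i1 = idm C N'" by (elim conjE bexE) blast
    then show ?thesis using that unfolding hom_def by blast
  qed
  note objs = M' N' assms(2,3)
  have piX: "\<And>X. X \<in> Arr C \<Longrightarrow> tgt C X = M' \<Longrightarrow> cmp C p1 (cmp C i1 X) = X"
    using post[OF pi] i1 p1 objs by (simp add: ar IDA)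
  have qjX: "\<And>X. X \<in> Arr C \<Longrightarrow> tgt C X = N' \<Longrightarrow> cmp C q1 (cmp C j1 X) = X"
    using post[OF qj] j1 q1 objs by (simp add: ar IDA)
  note basic = i1 p1 j1 q1 pi qj piX qjX objs IDA
  show ?thesis
  proof (intro conjI impI)
    assume SR: "strongly_rickart C M N"
    show "strongly_rickart C M' N'"
      unfolding strongly_rickart_def
    proof (intro ballI allI impI)
      fix f k assume fh: "f \<in> hom C M' N'" and kk: "is_kernel C f k"
      have f: "f \<in> Arr C" "src C f = M'" "tgt C f = N'" using fh by (auto simp: hom_def)
      define K where "K = src C k"
      have k: "k \<in> Arr C" "tgt C k = M'" "src C k = K" "cmp C f k = zro C K N'"
        using kk f unfolding is_kernel_def K_def by auto
      have K: "K \<in> Obj C" using ST k by blast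
      define g where "g = cmp C j1 (cmp C f p1)"
      have g: "g \<in> Arr C" "src C g = M" "tgt C g = N" using basic f by (simp_all add: g_def ar)
      obtain kg where kg: "is_kernel C g kg" using KER g by blast
      define Kg where "Kg = src C kg"
      have kgp: "kg \<in> Arr C" "tgt C kg = M" "src C kg = Kg" "cmp C g kg = zro C Kg N"
        using kg g unfolding is_kernel_def Kg_def by auto
      have Kg: "Kg \<in> Obj C" using ST kgp by blast
      have ghom: "g \<in> hom C M N" using g by (simp add: hom_def)
      have FI: "fully_invariant C kg" and SEC: "is_section C kg" using SR ghom kg
        unfolding strongly_rickart_def by blast+
      obtain r where r: "r \<in> Arr C" "src C r = M" "tgt C r = Kg" "cmp C r kg = idm C Kg"
        using SEC kgp unfolding is_section_def hom_def by auto
      have "cmp C g (cmp C i1 k) = zro C K N"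
        using basic f k K by (simp add: g_def ar)
      then obtain u where u: "u \<in> Arr C" "src C u = K" "tgt C u = Kg" "cmp C kg u = cmp C i1 k"
        using kernel_factor[OF kg, of "cmp C i1 k"] basic k g kgp by (auto simp: ar)
      have "cmp C j1 (cmp C f (cmp C p1 kg)) = zro C Kg N"
        using kgp basic f by (simp add: g_def ar)
      then have "cmp C q1 (cmp C j1 (cmp C f (cmp C p1 kg))) = zro C Kg N'"
        using basic Kg by (simp add: ar)
      then have "cmp C f (cmp C p1 kg) = zro C Kg N'"
        using basic kgp f by (simp add: ar)
      then obtain v where v: "v \<in> Arr C" "src C v = Kg" "tgt C v = K" "cmp C k v = cmp C p1 kg"
        using kernel_factor[OF kk, of "cmp C p1 kg"] basic k f kgp by (auto simp: ar)
      have kvX: "\<And>X. X \<in> Arr C \<Longrightarrow> tgt C X = Kg \<Longrightarrow> cmp C k (cmp C v X) = cmp C p1 (cmp C kg X)"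
        using post[OF v(4)] v k basic kgp by (simp add: ar)
      have kguX: "\<And>X. X \<in> Arr C \<Longrightarrow> tgt C X = K \<Longrightarrow> cmp C kg (cmp C u X) = cmp C i1 (cmp C k X)"
        using post[OF u(4)] u k basic kgp by (simp add: ar)
      have rkgX: "\<And>X. X \<in> Arr C \<Longrightarrow> tgt C X = Kg \<Longrightarrow> cmp C r (cmp C kg X) = X"
        using post[OF r(4)] r Kg kgp by (simp add: ar IDA)
      have mono_k: "\<And>a b. a \<in> Arr C \<Longrightarrow> b \<in> Arr C \<Longrightarrow> tgt C a = K \<Longrightarrow> tgt C b = K
          \<Longrightarrow> src C a = src C b \<Longrightarrow> cmp C k a = cmp C k b \<Longrightarrow> a = b"
        using kernel_mono[OF kk] k by auto
      have vu: "cmp C v u = idm C K"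
      proof (rule mono_k)
        show "cmp C k (cmp C v u) = cmp C k (idm C K)"
          using kvX[of u] u v k basic K by (simp add: u(4) ar)
      qed (use u v K IDA in \<open>simp_all add: ar\<close>)
      show "fully_invariant C k \<and> is_section C k"
      proof
        show "is_section C k"
          unfolding is_section_def
        proof (intro conjI bexI)
          show "k \<in> Arr C" by (rule k(1))
          show "cmp C v (cmp C r i1) \<in> hom C (tgt C k) (src C k)"
            using v r basic k by (simp add: hom_def ar)
          have "cmp C (cmp C v (cmp C r i1)) k = cmp C v (cmp C r (cmp C i1 k))"
            using v r basic k by (simp add: ar)
          also have "\<dots> = cmp C v (cmp C r (cmp C kg u))" by (simp add: u(4))
          also have "\<dots> = cmp C v u" using rkgX[of u] u by simp
          finally show "cmp C (cmp C v (cmp C r i1)) k = idm C (src C k)" using vu k by simp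
        qed
        show "fully_invariant C k"
          unfolding fully_invariant_def
        proof (intro conjI ballI)
          show "mono C k" unfolding mono_def
          proof (intro conjI ballI impI)
            show "k \<in> Arr C" by (rule k(1))
            fix x a b assume "x \<in> Obj C" "a \<in> hom C x (src C k)" "b \<in> hom C x (src C k)"
              "cmp C k a = cmp C k b"
            then show "a = b" using mono_k k by (auto simp: hom_def)
          qed
          fix h assume hh: "h \<in> hom C (tgt C k) (tgt C k)"
          have h: "h \<in> Arr C" "src C h = M'" "tgt C h = M'" using hh k by (auto simp: hom_def)
          define H where "H = cmp C i1 (cmp C h p1)"
          have Hh: "H \<in> hom C (tgt C kg) (tgt C kg)" using h basic kgp by (simp add: H_def hom_def ar)
          obtain \<beta> where \<beta>: "\<beta> \<in> hom C (src C kg) (src C kg)" "cmp C H kg = cmp C kg \<beta>"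
            using FI Hh unfolding fully_invariant_def by blast
          have b: "\<beta> \<in> Arr C" "src C \<beta> = Kg" "tgt C \<beta> = Kg" using \<beta>(1) kgp by (auto simp: hom_def)
          show "\<exists>\<alpha>\<in>hom C (src C k) (src C k). cmp C h k = cmp C k \<alpha>"
          proof (intro bexI)
            show "cmp C v (cmp C \<beta> u) \<in> hom C (src C k) (src C k)"
              using v b u k by (simp add: hom_def ar)
            have "cmp C k (cmp C v (cmp C \<beta> u)) = cmp C p1 (cmp C kg (cmp C \<beta> u))"
              using kvX[of "cmp C \<beta> u"] b u by (simp add: ar)
            also have "\<dots> = cmp C p1 (cmp C (cmp C kg \<beta>) u)" using b u kgp by (simp add: ar)
            also have "\<dots> = cmp C p1 (cmp C (cmp C H kg) u)" by (simp add: \<beta>(2))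
            also have "\<dots> = cmp C p1 (cmp C H (cmp C kg u))"
              using Hh u kgp by (simp add: hom_def ar)
            also have "\<dots> = cmp C p1 (cmp C H (cmp C i1 k))" by (simp add: u(4))
            also have "\<dots> = cmp C h k" using basic h k by (simp add: H_def ar)
            finally show "cmp C h k = cmp C k (cmp C v (cmp C \<beta> u))" by simp
          qed
        qed
      qed
    qed
  next
    assume DSR: "dual_strongly_rickart C M N"
    show "dual_strongly_rickart C M' N'"
    unfolding dual_strongly_rickart_def
    proof (intro ballI allI impI)
      fix f c assume fh: "f \<in> hom C M' N'" and cc: "is_cokernel C f c"
      have f: "f \<in> Arr C" "src C f = M'" "tgt C f = N'" using fh by (auto simp: hom_def)
      define Q where "Q = tgt C c"
      have c: "c \<in> Arr C" "src C c = N'" "tgt C c = Q" "cmp C c f = zro C M' Q"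
        using cc f unfolding is_cokernel_def Q_def by auto
      have Q: "Q \<in> Obj C" using ST c by blast
      define g where "g = cmp C j1 (cmp C f p1)"
      have g: "g \<in> Arr C" "src C g = M" "tgt C g = N" using basic f by (simp_all add: g_def ar)
      obtain cg where cg: "is_cokernel C g cg" using COK g by blast
      define Qg where "Qg = tgt C cg"
      have cgp: "cg \<in> Arr C" "src C cg = N" "tgt C cg = Qg" "cmp C cg g = zro C M Qg"
        using cg g unfolding is_cokernel_def Qg_def by auto
      have Qg: "Qg \<in> Obj C" using ST cgp by blast
      have ghom: "g \<in> hom C M N" using g by (simp add: hom_def)
      have FC: "fully_coinvariant C cg" and RET: "is_retraction C cg" using DSR ghom cg
        unfolding dual_strongly_rickart_def by blast+
      obtain s where s: "s \<in> Arr C" "src C s = Qg" "tgt C s = N" "cmp C cg s = idm C Qg"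
        using RET cgp unfolding is_retraction_def hom_def by auto
      have cfX: "\<And>X. X \<in> Arr C \<Longrightarrow> tgt C X = M' \<Longrightarrow> cmp C c (cmp C f X) = zro C (src C X) Q"
        using post[OF c(4)] c f Q by (simp add: ar)
      have "cmp C (cmp C c q1) g = zro C M Q"
        using basic f c cfX Q by (simp add: g_def ar)
      then obtain u where u: "u \<in> Arr C" "src C u = Qg" "tgt C u = Q" "cmp C u cg = cmp C c q1"
        using coker_factor[OF cg, of "cmp C c q1"] basic c g cgp by (auto simp: ar)
      have cggX: "\<And>X. X \<in> Arr C \<Longrightarrow> tgt C X = M \<Longrightarrow> cmp C cg (cmp C j1 (cmp C f (cmp C p1 X))) = zro C (src C X) Qg"
      proof -
        fix X assume X: "X \<in> Arr C" "tgt C X = M"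
        have "cmp C cg (cmp C j1 (cmp C f (cmp C p1 X))) = cmp C (cmp C cg g) X"
          using X basic f cgp(1,2,3) by (simp add: g_def ar)
        then show "cmp C cg (cmp C j1 (cmp C f (cmp C p1 X))) = zro C (src C X) Qg"
          using X cgp Qg by (simp add: ar)
      qed
      have "cmp C (cmp C cg j1) f = zro C M' Qg"
        using cggX[of i1] basic f cgp by (simp add: ar)
      then obtain v where v: "v \<in> Arr C" "src C v = Q" "tgt C v = Qg" "cmp C v c = cmp C cg j1"
        using coker_factor[OF cc, of "cmp C cg j1"] basic c f cgp by (auto simp: ar)
      have vcX: "\<And>X. X \<in> Arr C \<Longrightarrow> tgt C X = N' \<Longrightarrow> cmp C v (cmp C c X) = cmp C cg (cmp C j1 X)"
        using post[OF v(4)] v c basic cgp by (simp add: ar)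
      have ucgX: "\<And>X. X \<in> Arr C \<Longrightarrow> tgt C X = N \<Longrightarrow> cmp C u (cmp C cg X) = cmp C c (cmp C q1 X)"
        using post[OF u(4)] u c basic cgp by (simp add: ar)
      have epi_c: "\<And>a b. a \<in> Arr C \<Longrightarrow> b \<in> Arr C \<Longrightarrow> src C a = Q \<Longrightarrow> src C b = Q
          \<Longrightarrow> tgt C a = tgt C b \<Longrightarrow> cmp C a c = cmp C b c \<Longrightarrow> a = b"
        using coker_epi[OF cc] c by auto
      have uv: "cmp C u v = idm C Q"
      proof (rule epi_c)
        have "cmp C (cmp C u v) c = cmp C u (cmp C v c)" using u v c by (simp add: ar)
        also have "\<dots> = cmp C u (cmp C cg j1)" by (simp add: v(4))
        also have "\<dots> = c" using ucgX[of j1] basic c by (simp add: ar)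
        finally show "cmp C (cmp C u v) c = cmp C (idm C Q) c" using c Q by (simp add: ar IDA)
      qed (use u v Q IDA in \<open>simp_all add: ar\<close>)
      show "fully_coinvariant C c \<and> is_retraction C c"
      proof
        show "is_retraction C c"
          unfolding is_retraction_def
        proof (intro conjI bexI)
          show "c \<in> Arr C" by (rule c(1))
          show "cmp C q1 (cmp C s v) \<in> hom C (tgt C c) (src C c)"
            using v s basic c by (simp add: hom_def ar)
          have "cmp C c (cmp C q1 (cmp C s v)) = cmp C u (cmp C cg (cmp C s v))"
            using ucgX[of "cmp C s v"] s v by (simp add: ar)
          also have "\<dots> = cmp C u v" using post[OF s(4), of v] s v cgp Qg by (simp add: ar IDA)
          finally show "cmp C c (cmp C q1 (cmp C s v)) = idm C (tgt C c)" using uv c by simp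
        qed
        show "fully_coinvariant C c"
          unfolding fully_coinvariant_def
        proof (intro conjI ballI)
          show "epi C c" unfolding epi_def
          proof (intro conjI ballI impI)
            show "c \<in> Arr C" by (rule c(1))
            fix x a b assume "x \<in> Obj C" "a \<in> hom C (tgt C c) x" "b \<in> hom C (tgt C c) x"
              "cmp C a c = cmp C b c"
            then show "a = b" using epi_c c by (auto simp: hom_def)
          qed
          fix h assume hh: "h \<in> hom C (src C c) (src C c)"
          have h: "h \<in> Arr C" "src C h = N'" "tgt C h = N'" using hh c by (auto simp: hom_def)
          define H where "H = cmp C j1 (cmp C h q1)"
          have Hh: "H \<in> hom C (src C cg) (src C cg)" using h basic cgp by (simp add: H_def hom_def ar)
          obtain \<gamma> where \<gamma>: "\<gamma> \<in> hom C (tgt C cg) (tgt C cg)" "cmp C cg H = cmp C \<gamma> cg"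
            using FC Hh unfolding fully_coinvariant_def by blast
          have gm: "\<gamma> \<in> Arr C" "src C \<gamma> = Qg" "tgt C \<gamma> = Qg" using \<gamma>(1) cgp by (auto simp: hom_def)
          show "\<exists>\<gamma>'\<in>hom C (tgt C c) (tgt C c). cmp C c h = cmp C \<gamma>' c"
          proof (intro bexI)
            show "cmp C u (cmp C \<gamma> v) \<in> hom C (tgt C c) (tgt C c)"
              using v gm u c by (simp add: hom_def ar)
            have "cmp C (cmp C u (cmp C \<gamma> v)) c = cmp C u (cmp C \<gamma> (cmp C v c))"
              using u gm v c by (simp add: ar)
            also have "\<dots> = cmp C u (cmp C \<gamma> (cmp C cg j1))" by (simp add: v(4))
            also have "\<dots> = cmp C u (cmp C (cmp C \<gamma> cg) j1)" using gm cgp basic by (simp add: ar)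
            also have "\<dots> = cmp C u (cmp C (cmp C cg H) j1)" by (simp add: \<gamma>(2))
            also have "\<dots> = cmp C u (cmp C cg (cmp C j1 (cmp C h (cmp C q1 j1))))"
              using Hh cgp basic h by (simp add: H_def hom_def ar)
            also have "\<dots> = cmp C u (cmp C cg (cmp C j1 h))" using basic h by (simp add: ar)
            also have "\<dots> = cmp C c h" using ucgX[of "cmp C j1 h"] basic h by (simp add: ar)
            finally show "cmp C c h = cmp C (cmp C u (cmp C \<gamma> v)) c" by simp
          qed
        qed
      qed
    qed
  qed
qed
end
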